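(* Let $(\mathcal S,\mathcal A,P,r)$ be a finite MDP such that $\mathcal P^\pi g^\star=g^\star$ for every policy $\pi$, and let $(g^\star,h^\star)$ be a solution of the modified Bellman equations. Let $V^0\in\mathbb R^n$, $V^k=\frac{2}{k+2}V^0+\frac{k}{k+2}TV^{k-1}$ for $k\ge1$, and let $\pi_k$ be greedy policies, $T^{\pi_k}V^k=TV^k$. Then for every $k\ge1$, \[\|g^\star-g^{\pi_k}\|_\infty\le\|TV^k-V^k-g^\star\|_\infty\le\frac{8}{k+1}\|V^0-h^\star\|_\infty.\]
   Context: An MDP $(\mathcal S,\mathcal A,P,r)$ has finite state space $\mathcal S$ ($|\mathcal S|=n$, functions identified with $\mathbb R^n$), finite action space, transition probabilities $P(s'\mid s,a)$ and bounded reward $r$. For a policy $\pi$: $r^\pi(s)=\sum_a\pi(a\mid s)r(s,a)$, $\mathcal P^\pi(s,s')=\sum_a\pi(a\mid s)P(s'\mid s,a)$, $g^\pi(s)=\liminf_{T\to\infty}\frac1T\mathbb E_\pi[\sum_{t=0}^{T-1}r(s_t,a_t)\mid s_0=s]$, $g^\star=\max_\pi g^\pi$. $T^\pi V=r^\pi+\mathcal P^\pi V$, $(TV)(s)=\max_a\{r(s,a)+\sum_{s'}P(s'\mid s,a)V(s')\}$. A pair $(g,h)$ solves the modified Bellman equations if $\max_a\sum_{s'}P(s'\mid s,a)g(s')=g(s)$ and $\max_a\{r(s,a)+\sum_{s'}P(s'\mid s,a)h(s')\}=h(s)+g(s)$ for all $s$, with some policy attaining both maxima simultaneously; the first component of any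 solution equals $g^\star$. *)

theory Defs
  imports "HOL-Analysis.Analysis" "HOL-Library.Extended_Real"
begin

definition is_mdp :: "('s::finite \<Rightarrow> 'a::finite \<Rightarrow> 's \<Rightarrow> real) \<Rightarrow> bool" where
  "is_mdp P \<longleftrightarrow> (\<forall>s a s'. P s a s' \<ge> 0) \<and> (\<forall>s a. (\<Sum>s'\<in>UNIV. P s a s') = 1)"

definition is_policy :: "('s::finite \<Rightarrow> 'a::finite \<Rightarrow> real) \<Rightarrow> bool" where
  "is_policy \<pi> \<longleftrightarrow> (\<forall>s a. \<pi> s a \<ge> 0) \<and> (\<forall>s. (\<Sum>a\<in>UNIV. \<pi> s a) = 1)"

definition r_pol :: "('s::finite \<Rightarrow> 'a::finite \<Rightarrow> real) \<Rightarrow> ('s \<Rightarrow> 'a \<Rightarrow> real) \<Rightarrow> 's \<Rightarrow> real" where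
  "r_pol r \<pi> s = (\<Sum>a\<in>UNIV. \<pi> s a * r s a)"

definition P_pol :: "('s::finite \<Rightarrow> 'a::finite \<Rightarrow> 's \<Rightarrow> real) \<Rightarrow> ('s \<Rightarrow> 'a \<Rightarrow> real) \<Rightarrow> 's \<Rightarrow> 's \<Rightarrow> real" where
  "P_pol P \<pi> s s' = (\<Sum>a\<in>UNIV. \<pi> s a * P s a s')"

definition apply_P :: "('s::finite \<Rightarrow> 's \<Rightarrow> real) \<Rightarrow> ('s \<Rightarrow> real) \<Rightarrow> 's \<Rightarrow> real" where
  "apply_P M V s = (\<Sum>s'\<in>UNIV. M s s' * V s')"

definition T_pol :: "('s::finite \<Rightarrow> 'a::finite \<Rightarrow> 's \<Rightarrow> real) \<Rightarrow> ('s \<Rightarrow> 'a \<Rightarrow> real)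
    \<Rightarrow> ('s \<Rightarrow> 'a \<Rightarrow> real) \<Rightarrow> ('s \<Rightarrow> real) \<Rightarrow> 's \<Rightarrow> real" where
  "T_pol P r \<pi> V s = r_pol r \<pi> s + apply_P (P_pol P \<pi>) V s"

definition T_opt :: "('s::finite \<Rightarrow> 'a::finite \<Rightarrow> 's \<Rightarrow> real) \<Rightarrow> ('s \<Rightarrow> 'a \<Rightarrow> real)
    \<Rightarrow> ('s \<Rightarrow> real) \<Rightarrow> 's \<Rightarrow> real" where
  "T_opt P r V s = Max (range (\<lambda>a. r s a + (\<Sum>s'\<in>UNIV. P s a s' * V s')))"

fun state_dist :: "('s::finite \<Rightarrow> 'a::finite \<Rightarrow> 's \<Rightarrow> real) \<Rightarrow> ('s \<Rightarrow> 'a \<Rightarrow> real)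
    \<Rightarrow> 's \<Rightarrow> nat \<Rightarrow> 's \<Rightarrow> real" where
  "state_dist P \<pi> s0 0 s = (if s = s0 then 1 else 0)"
| "state_dist P \<pi> s0 (Suc t) s = (\<Sum>s''\<in>UNIV. state_dist P \<pi> s0 t s'' * P_pol P \<pi> s'' s)"

definition exp_reward :: "('s::finite \<Rightarrow> 'a::finite \<Rightarrow> 's \<Rightarrow> real) \<Rightarrow> ('s \<Rightarrow> 'a \<Rightarrow> real)
    \<Rightarrow> ('s \<Rightarrow> 'a \<Rightarrow> real) \<Rightarrow> 's \<Rightarrow> nat \<Rightarrow> real" where
  "exp_reward P r \<pi> s0 t = (\<Sum>s\<in>UNIV. state_dist P \<pi> s0 t s * r_pol r \<pi> s)"

definition gain :: "('s::finite \<Rightarrow> 'a::finite \<Rightarrow> 's \<Rightarrow> real) \<Rightarrow> ('s \<Rightarrow> 'a \<Rightarrow> real)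
    \<Rightarrow> ('s \<Rightarrow> 'a \<Rightarrow> real) \<Rightarrow> 's \<Rightarrow> real" where
  "gain P r \<pi> s = real_of_ereal (liminf (\<lambda>T::nat. ereal ((1 / real T) * (\<Sum>t<T. exp_reward P r \<pi> s t))))"

definition opt_gain :: "('s::finite \<Rightarrow> 'a::finite \<Rightarrow> 's \<Rightarrow> real) \<Rightarrow> ('s \<Rightarrow> 'a \<Rightarrow> real) \<Rightarrow> 's \<Rightarrow> real" where
  "opt_gain P r s = (SUP \<pi>\<in>{\<pi>. is_policy \<pi>}. gain P r \<pi> s)"

definition supnorm :: "('s::finite \<Rightarrow> real) \<Rightarrow> real" where
  "supnorm V = Max (range (\<lambda>s. \<bar>V s\<bar>))"

definition modified_bellman :: "('s::finite \<Rightarrow> 'a::finite \<Rightarrow> 's \<Rightarrow> real) \<Rightarrow> ('s \<Rightarrow> 'a \<Rightarrow> real)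
    \<Rightarrow> ('s \<Rightarrow> real) \<Rightarrow> ('s \<Rightarrow> real) \<Rightarrow> bool" where
  "modified_bellman P r g h \<longleftrightarrow>
     (\<forall>s. Max (range (\<lambda>a. \<Sum>s'\<in>UNIV. P s a s' * g s')) = g s) \<and>
     (\<forall>s. Max (range (\<lambda>a. r s a + (\<Sum>s'\<in>UNIV. P s a s' * h s'))) = h s + g s) \<and>
     (\<exists>\<pi>. is_policy \<pi> \<and>
        (\<forall>s. (\<Sum>a\<in>UNIV. \<pi> s a * (\<Sum>s'\<in>UNIV. P s a s' * g s')) = g s) \<and>
        (\<forall>s. (\<Sum>a\<in>UNIV. \<pi> s a * (r s a + (\<Sum>s'\<in>UNIV. P s a s' * h s'))) = h s + g s))"

end

theory Submission
  imports Defs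
begin


lemma supnorm_ge: "\<bar>V s\<bar> \<le> supnorm (V::'s::finite \<Rightarrow> real)"
  unfolding supnorm_def by (rule Max_ge) auto

lemma supnorm_le: "(\<And>s. \<bar>V s\<bar> \<le> c) \<Longrightarrow> supnorm (V::'s::finite \<Rightarrow> real) \<le> c"
  unfolding supnorm_def by (subst Max_le_iff) auto

lemma supnorm_nonneg: "0 \<le> supnorm (V::'s::finite \<Rightarrow> real)"
  using supnorm_ge[of V undefined] by linarith

lemma supnorm_swap: "supnorm (\<lambda>s. u s - v s) = supnorm (\<lambda>s. v s - (u s::real))"
  unfolding supnorm_def by (simp add: abs_minus_commute)

lemma lin_bound:
  fixes a b u v U W :: real
  assumes "a \<ge> 0" "b \<ge> 0" "\<bar>u\<bar> \<le> U" "\<bar>v\<bar> \<le> W"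
  shows "\<bar>a * u + b * v\<bar> \<le> a * U + b * W"
proof -
  have "\<bar>a * u + b * v\<bar> \<le> \<bar>a * u\<bar> + \<bar>b * v\<bar>" by (rule abs_triangle_ineq)
  also have "\<dots> = a * \<bar>u\<bar> + b * \<bar>v\<bar>" using assms by (simp add: abs_mult)
  also have "\<dots> \<le> a * U + b * W" using assms by (intro add_mono mult_left_mono) auto
  finally show ?thesis .
qed

lemma max_range_le:
  fixes f g :: "'a::finite \<Rightarrow> real"
  assumes "\<And>a. f a \<le> g a + c"
  shows "Max (range f) \<le> Max (range g) + c"
proof -
  have "Max (range f) \<in> range f" by (rule Max_in) auto
  then obtain a where "Max (range f) = f a" by (metis rangeE)
  moreover have "g a \<le> Max (range g)" by (rule Max_ge) auto
  ultimately show ?thesis using assms[of a] by linarith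
qed

lemma T_opt_nonexp:
  assumes mdp: "is_mdp P"
  shows "\<bar>T_opt P r V s - T_opt P r U s\<bar> \<le> supnorm (\<lambda>s. V s - U s)"
proof -
  let ?N = "supnorm (\<lambda>s. V s - U s)"
  have key: "\<bar>(\<Sum>s'\<in>UNIV. P s a s' * V s') - (\<Sum>s'\<in>UNIV. P s a s' * U s')\<bar> \<le> ?N" for a
  proof -
    have "\<bar>(\<Sum>s'\<in>UNIV. P s a s' * V s') - (\<Sum>s'\<in>UNIV. P s a s' * U s')\<bar> = \<bar>\<Sum>s'\<in>UNIV. P s a s' * (V s' - U s')\<bar>"
      by (simp add: sum_subtractf right_diff_distrib)
    also have "\<dots> \<le> (\<Sum>s'\<in>UNIV. \<bar>P s a s' * (V s' - U s')\<bar>)" by (rule sum_abs)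
    also have "\<dots> \<le> (\<Sum>s'\<in>UNIV. P s a s' * ?N)"
    proof (rule sum_mono)
      fix s' show "\<bar>P s a s' * (V s' - U s')\<bar> \<le> P s a s' * ?N"
        using mdp supnorm_ge[of "\<lambda>s. V s - U s" s'] unfolding is_mdp_def
        by (simp add: abs_mult mult_left_mono)
    qed
    also have "\<dots> = ?N" using mdp by (simp add: is_mdp_def sum_distrib_right[symmetric])
    finally show ?thesis .
  qed
  have 1: "T_opt P r V s \<le> T_opt P r U s + ?N" unfolding T_opt_def
  proof (rule max_range_le)
    fix a show "r s a + (\<Sum>s'\<in>UNIV. P s a s' * V s') \<le> r s a + (\<Sum>s'\<in>UNIV. P s a s' * U s') + ?N"
      using key[of a] unfolding abs_le_iff by linarith
  qed
  have 2: "T_opt P r U s \<le> T_opt P r V s + ?N" unfolding T_opt_def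
  proof (rule max_range_le)
    fix a show "r s a + (\<Sum>s'\<in>UNIV. P s a s' * U s') \<le> r s a + (\<Sum>s'\<in>UNIV. P s a s' * V s') + ?N"
      using key[of a] unfolding abs_le_iff by linarith
  qed
  show ?thesis using 1 2 by linarith
qed

lemma T_opt_shift:
  assumes "\<And>a. (\<Sum>s'\<in>UNIV. P s a s' * g s') = g s"
  shows "T_opt P r (\<lambda>s. W s + c * g s) s = T_opt P r W s + c * g s"
proof -
  have eq: "r s a + (\<Sum>s'\<in>UNIV. P s a s' * (W s' + c * g s')) = r s a + (\<Sum>s'\<in>UNIV. P s a s' * W s') + c * g s" for a
  proof -
    have "(\<Sum>s'\<in>UNIV. P s a s' * (W s' + c * g s')) = (\<Sum>s'\<in>UNIV. P s a s' * W s') + c * (\<Sum>s'\<in>UNIV. P s a s' * g s')"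
      by (simp add: algebra_simps sum.distrib sum_distrib_left)
    then show ?thesis using assms[of a] by simp
  qed
  have 1: "T_opt P r (\<lambda>s. W s + c * g s) s \<le> T_opt P r W s + c * g s" unfolding T_opt_def
    by (rule max_range_le) (simp add: eq)
  have 2: "T_opt P r W s \<le> T_opt P r (\<lambda>s. W s + c * g s) s + - (c * g s)" unfolding T_opt_def
    by (rule max_range_le) (simp add: eq)
  show ?thesis using 1 2 by linarith
qed

lemma inv_action:
  fixes P :: "'s::finite \<Rightarrow> 'a::finite \<Rightarrow> 's \<Rightarrow> real"
  assumes inv: "\<And>\<pi>. is_policy \<pi> \<Longrightarrow> apply_P (P_pol P \<pi>) g = g"
  shows "(\<Sum>s'\<in>UNIV. P s a s' * g s') = g s"
proof -
  define \<pi> where "\<pi> = (\<lambda>(s::'s) (a'::'a). if a' = a then 1 else (0::real))"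
  have "is_policy \<pi>" unfolding is_policy_def \<pi>_def by simp
  then have "apply_P (P_pol P \<pi>) g s = g s" using inv by simp
  moreover have "(\<Sum>aa\<in>UNIV. (if aa = a then 1 else 0) * P s aa s') = P s a s'" for s'
  proof -
    have "(\<lambda>aa. (if aa = a then 1 else 0) * P s aa s') = (\<lambda>aa. if aa = a then P s a s' else 0)" by auto
    then show ?thesis by (simp only:) simp
  qed
  ultimately show ?thesis unfolding apply_P_def P_pol_def \<pi>_def by simp
qed

lemma ar1_gen: fixes A B C D :: real assumes "D \<ge> 0" "A \<ge> 1" and B: "B = A + 1" and C: "C = A + 2"
  shows "(2 / B - 2 / C) * (2 * D) + (1 - 2 / B) * (4 * D / A) \<le> 4 * D / B"
proof -
  have p: "A > 0" "B > 0" "C > 0" using assms by auto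
  have e1: "2 / B - 2 / C = 2 / (B * C)" using p by (simp add: field_simps B C)
  have e2: "1 - 2 / B = (B - 2) / B" using p by (simp add: field_simps)
  have "(2 / B - 2 / C) * (2 * D) + (1 - 2 / B) * (4 * D / A) = (4 * D / B) * (1 / C + (B - 2) / A)"
    unfolding e1 e2 using p by (simp add: field_simps)
  also have "\<dots> \<le> (4 * D / B) * 1"
  proof (rule mult_left_mono)
    have "(B - 2) / A = 1 - 1 / A" using p by (simp add: field_simps B)
    moreover have "1 / C \<le> 1 / A" using p by (intro divide_left_mono) (auto simp: C)
    ultimately show "1 / C + (B - 2) / A \<le> 1" by simp
  qed (use assms p in auto)
  finally show ?thesis by simp
qed
lemma ar2_gen: fixes A B D :: real assumes "D \<ge> 0" "A \<ge> 1" and B: "B = A + 1"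
  shows "2 / B * (2 * D) + (1 - 2 / B) * (4 * D / A) \<le> 8 / A * D"
proof -
  have p: "A > 0" "B > 0" using assms by auto
  have e2: "1 - 2 / B = (B - 2) / B" using p by (simp add: field_simps)
  have "2 / B * (2 * D) + (1 - 2 / B) * (4 * D / A) = (4 * D / A) * (A / B + (B - 2) / B)"
    unfolding e2 using p by (simp add: field_simps)
  also have "\<dots> \<le> (4 * D / A) * 2"
  proof (rule mult_left_mono)
    have "A / B + (B - 2) / B = (A + B - 2) / B" by (simp add: add_divide_distrib diff_divide_distrib)
    also have "\<dots> \<le> 2" using p by (simp add: divide_le_eq B)
    finally show "A / B + (B - 2) / B \<le> 2" .
  qed (use assms p in auto)
  finally show ?thesis by simp
qed
lemma ar1: fixes D m :: real assumes "D \<ge> 0" "m \<ge> 0"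
  shows "(2 / (m + 2) - 2 / (m + 3)) * (2 * D) + (1 - 2 / (m + 2)) * (4 * D / (m + 1)) \<le> 4 * D / (m + 2)"
  using ar1_gen[of D "m+1" "m+2" "m+3"] assms by simp
lemma ar2: fixes D m :: real assumes "D \<ge> 0" "m \<ge> 0"
  shows "2 / (m + 2) * (2 * D) + (1 - 2 / (m + 2)) * (4 * D / (m + 1)) \<le> 8 / (m + 1) * D"
  using ar2_gen[of D "m+1" "m+2"] assms by simp


lemma halpern:
  fixes F :: "('s::finite \<Rightarrow> real) \<Rightarrow> 's \<Rightarrow> real" and x :: "nat \<Rightarrow> 's \<Rightarrow> real"
  assumes ne: "\<And>u v s. \<bar>F u s - F v s\<bar> \<le> supnorm (\<lambda>s. u s - v s)"
    and fp: "F h = h"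
    and rec: "\<And>k. k \<ge> 1 \<Longrightarrow> x k = (\<lambda>s. 2 / (real k + 2) * x 0 s + real k / (real k + 2) * F (x (k - 1)) s)"
    and k: "k \<ge> 1"
  shows "supnorm (\<lambda>s. F (x k) s - x k s) \<le> 8 / (real k + 1) * supnorm (\<lambda>s. x 0 s - h s)"
proof -
  define D where "D = supnorm (\<lambda>s. x 0 s - h s)"
  define b where "b = (\<lambda>k::nat. 2 / (real k + 2))"
  have D0: "D \<ge> 0" unfolding D_def by (rule supnorm_nonneg)
  have b0: "0 \<le> b k" "b k \<le> 1" "0 \<le> 1 - b k" for k unfolding b_def by auto
  have bdec: "0 \<le> b k - b (Suc k)" for k unfolding b_def by (simp add: frac_le)
  have recb: "x k s = b k * x 0 s + (1 - b k) * F (x (k - 1)) s" if "k \<ge> 1" for k s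
  proof -
    have "1 - b k = real k / (real k + 2)" unfolding b_def by (simp add: field_simps)
    then show ?thesis using fun_cong[OF rec[OF that], of s] unfolding b_def by simp
  qed
  have recS: "x (Suc k) s = b (Suc k) * x 0 s + (1 - b (Suc k)) * F (x k) s" for k s
    using recb[where k="Suc k" and s=s] by simp
  have bnd: "supnorm (\<lambda>s. x k s - h s) \<le> D" for k
  proof (induction k)
    case 0 then show ?case unfolding D_def by simp
  next
    case (Suc k)
    show ?case
    proof (rule supnorm_le)
      fix s
      have "x (Suc k) s - h s = b (Suc k) * (x 0 s - h s) + (1 - b (Suc k)) * (F (x k) s - F h s)"
        using recS[where k=k and s=s] fp by (simp add: algebra_simps)
      also have "\<bar>\<dots>\<bar> \<le> b (Suc k) * D + (1 - b (Suc k)) * D"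
      proof (rule lin_bound)
        show "\<bar>x 0 s - h s\<bar> \<le> D" unfolding D_def by (rule supnorm_ge)
        show "\<bar>F (x k) s - F h s\<bar> \<le> D" using ne[where u="x k" and v=h and s=s] Suc by linarith
      qed (use b0 in auto)
      finally show "\<bar>x (Suc k) s - h s\<bar> \<le> D" by (simp add: algebra_simps)
    qed
  qed
  have Fb: "\<bar>x 0 s - F (x k) s\<bar> \<le> 2 * D" for k s
  proof -
    have "\<bar>x 0 s - h s\<bar> \<le> D" unfolding D_def by (rule supnorm_ge)
    moreover have "\<bar>F (x k) s - F h s\<bar> \<le> D" using ne[where u="x k" and v=h and s=s] bnd[of k] by linarith
    ultimately show ?thesis using fp by (simp add: abs_le_iff) 
  qed
  define a where "a = (\<lambda>k. supnorm (\<lambda>s. x k s - x (k - 1) s))"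
  have abnd: "a n \<le> 4 * D / (real n + 1)" if "n \<ge> 1" for n
    using that
  proof (induction n rule: nat_induct_at_least)
    case base
    show ?case unfolding a_def
    proof (rule supnorm_le)
      fix s
      have "x 1 s - x (1 - 1) s = (1 - b 1) * (F (x 0) s - x 0 s)"
        using recb[where k=1 and s=s] by (simp add: algebra_simps)
      also have "\<bar>\<dots>\<bar> \<le> (1 - b 1) * (2 * D)"
        using Fb[where k=0 and s=s] b0[of 1] by (simp add: abs_mult abs_minus_commute mult_left_mono)
      also have "\<dots> \<le> 4 * D / (real 1 + 1)" unfolding b_def using D0 by simp
      finally show "\<bar>x 1 s - x (1 - 1) s\<bar> \<le> 4 * D / (real 1 + 1)" .
    qed
  next
    case (Suc n)
    show ?case unfolding a_def
    proof (rule supnorm_le)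
      fix s
      have "x (Suc n) s - x (Suc n - 1) s = (b n - b (Suc n)) * (F (x n) s - x 0 s) + (1 - b n) * (F (x n) s - F (x (n - 1)) s)"
        using recS[where k=n and s=s] recb[where k=n and s=s] Suc(1) by (simp add: algebra_simps)
      also have "\<bar>\<dots>\<bar> \<le> (b n - b (Suc n)) * (2 * D) + (1 - b n) * (4 * D / (real n + 1))"
      proof (rule lin_bound)
        show "\<bar>F (x n) s - x 0 s\<bar> \<le> 2 * D" using Fb[where k=n and s=s] by (simp add: abs_minus_commute)
        show "\<bar>F (x n) s - F (x (n - 1)) s\<bar> \<le> 4 * D / (real n + 1)"
          using ne[where u="x n" and v="x (n - 1)" and s=s] Suc(2) unfolding a_def by linarith
      qed (use b0 bdec in auto)
      also have "\<dots> \<le> 4 * D / (real (Suc n) + 1)"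
      proof -
        have bS: "b (Suc n) = 2 / (real n + 3)" unfolding b_def by (simp add: add.commute)
        show ?thesis unfolding bS using ar1[OF D0, of "real n"] unfolding b_def by (simp add: add.commute)
      qed
      finally show "\<bar>x (Suc n) s - x (Suc n - 1) s\<bar> \<le> 4 * D / (real (Suc n) + 1)" .
    qed
  qed
  show ?thesis unfolding D_def[symmetric]
  proof (rule supnorm_le)
    fix s
    have "F (x k) s - x k s = b k * (F (x k) s - x 0 s) + (1 - b k) * (F (x k) s - F (x (k - 1)) s)"
      using recb[OF k, of s] by (simp add: algebra_simps)
    also have "\<bar>\<dots>\<bar> \<le> b k * (2 * D) + (1 - b k) * (4 * D / (real k + 1))"
    proof (rule lin_bound)
      show "\<bar>F (x k) s - x 0 s\<bar> \<le> 2 * D" using Fb[where k=k and s=s] by (simp add: abs_minus_commute)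
      show "\<bar>F (x k) s - F (x (k - 1)) s\<bar> \<le> 4 * D / (real k + 1)"
        using ne[where u="x k" and v="x (k - 1)" and s=s] abnd[OF k] unfolding a_def by linarith
    qed (use b0 in auto)
    also have "\<dots> \<le> 8 / (real k + 1) * D"
      using ar2[OF D0, of "real k"] unfolding b_def by simp
    finally show "\<bar>F (x k) s - x k s\<bar> \<le> 8 / (real k + 1) * D" by simp
  qed
qed



lemma P_pol_nonneg: "is_mdp P \<Longrightarrow> is_policy \<pi> \<Longrightarrow> P_pol P \<pi> s s' \<ge> 0"
  unfolding P_pol_def is_mdp_def is_policy_def by (auto intro: sum_nonneg)

lemma P_pol_row:
  fixes P :: "'s::finite \<Rightarrow> 'a::finite \<Rightarrow> 's \<Rightarrow> real"
  assumes "is_mdp P" "is_policy \<pi>"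
  shows "(\<Sum>s'\<in>UNIV. P_pol P \<pi> s s') = 1"
proof -
  have "(\<Sum>s'\<in>UNIV. P_pol P \<pi> s s') = (\<Sum>a\<in>UNIV. \<Sum>s'\<in>UNIV. \<pi> s a * P s a s')"
    unfolding P_pol_def by (rule sum.swap)
  also have "\<dots> = (\<Sum>a\<in>UNIV. \<pi> s a)"
    using assms(1) by (simp add: sum_distrib_left[symmetric] is_mdp_def)
  also have "\<dots> = 1" using assms(2) by (simp add: is_policy_def)
  finally show ?thesis .
qed

lemma sd_nonneg: "is_mdp P \<Longrightarrow> is_policy \<pi> \<Longrightarrow> state_dist P \<pi> s0 t s \<ge> 0"
  by (induction t arbitrary: s) (auto intro!: sum_nonneg mult_nonneg_nonneg P_pol_nonneg)

lemma Ex_Suc: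
  fixes P :: "'s::finite \<Rightarrow> 'a::finite \<Rightarrow> 's \<Rightarrow> real"
  shows "(\<Sum>s\<in>UNIV. state_dist P \<pi> s0 (Suc t) s * f s)
       = (\<Sum>s\<in>UNIV. state_dist P \<pi> s0 t s * apply_P (P_pol P \<pi>) f s)"
proof -
  have "(\<Sum>s\<in>UNIV. state_dist P \<pi> s0 (Suc t) s * f s)
      = (\<Sum>s\<in>UNIV. \<Sum>s''\<in>UNIV. state_dist P \<pi> s0 t s'' * (P_pol P \<pi> s'' s * f s))"
    by (simp add: sum_distrib_right mult.assoc)
  also have "\<dots> = (\<Sum>s''\<in>UNIV. \<Sum>s\<in>UNIV. state_dist P \<pi> s0 t s'' * (P_pol P \<pi> s'' s * f s))"
    by (rule sum.swap)
  also have "\<dots> = (\<Sum>s\<in>UNIV. state_dist P \<pi> s0 t s * apply_P (P_pol P \<pi>) f s)"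
    by (simp add: apply_P_def sum_distrib_left)
  finally show ?thesis .
qed

lemma sd_sum:
  fixes P :: "'s::finite \<Rightarrow> 'a::finite \<Rightarrow> 's \<Rightarrow> real"
  assumes "is_mdp P" "is_policy \<pi>"
  shows "(\<Sum>s\<in>UNIV. state_dist P \<pi> s0 t s) = 1"
proof (induction t)
  case 0 then show ?case by simp
next
  case (Suc t)
  have "(\<Sum>s\<in>UNIV. state_dist P \<pi> s0 (Suc t) s) = (\<Sum>s\<in>UNIV. state_dist P \<pi> s0 (Suc t) s * 1)" by simp
  also have "\<dots> = (\<Sum>s\<in>UNIV. state_dist P \<pi> s0 t s * apply_P (P_pol P \<pi>) (\<lambda>_. 1) s)" by (rule Ex_Suc)
  also have "\<dots> = (\<Sum>s\<in>UNIV. state_dist P \<pi> s0 t s)"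
    using P_pol_row[OF assms] by (simp add: apply_P_def)
  finally show ?case using Suc by simp
qed

lemma Ex_bound:
  fixes P :: "'s::finite \<Rightarrow> 'a::finite \<Rightarrow> 's \<Rightarrow> real"
  assumes "is_mdp P" "is_policy \<pi>"
  shows "\<bar>\<Sum>s\<in>UNIV. state_dist P \<pi> s0 t s * f s\<bar> \<le> supnorm f"
proof -
  have "\<bar>\<Sum>s\<in>UNIV. state_dist P \<pi> s0 t s * f s\<bar> \<le> (\<Sum>s\<in>UNIV. \<bar>state_dist P \<pi> s0 t s * f s\<bar>)"
    by (rule sum_abs)
  also have "\<dots> \<le> (\<Sum>s\<in>UNIV. state_dist P \<pi> s0 t s * supnorm f)"
  proof (rule sum_mono)
    fix s show "\<bar>state_dist P \<pi> s0 t s * f s\<bar> \<le> state_dist P \<pi> s0 t s * supnorm f"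
      using sd_nonneg[OF assms, of s0 t s] supnorm_ge[of f s] by (simp add: abs_mult mult_left_mono)
  qed
  also have "\<dots> = supnorm f" using sd_sum[OF assms] by (simp add: sum_distrib_right[symmetric])
  finally show ?thesis .
qed

lemma Ex0: "(\<Sum>s\<in>UNIV. state_dist P \<pi> s0 0 s * f s) = (f s0 :: real)"
proof -
  have "(\<lambda>s. state_dist P \<pi> s0 0 s * f s) = (\<lambda>s. if s = s0 then f s0 else 0)" by auto
  then show ?thesis by (simp only:) simp
qed

lemma Ex_inv:
  fixes P :: "'s::finite \<Rightarrow> 'a::finite \<Rightarrow> 's \<Rightarrow> real"
  assumes "apply_P (P_pol P \<pi>) g = g"
  shows "(\<Sum>s\<in>UNIV. state_dist P \<pi> s0 t s * g s) = g s0"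
proof (induction t)
  case 0 then show ?case by (rule Ex0)
next
  case (Suc t) then show ?case by (subst Ex_Suc) (simp only: assms)
qed

lemma ereal_bounds:
  assumes "ereal a \<le> L" "L \<le> ereal b"
  shows "a \<le> real_of_ereal L \<and> real_of_ereal L \<le> b"
  using assms by (cases L) auto



lemma gain_bound:
  fixes P :: "'s::finite \<Rightarrow> 'a::finite \<Rightarrow> 's \<Rightarrow> real"
  assumes mdp: "is_mdp P" and pol: "is_policy \<pi>"
    and inv: "apply_P (P_pol P \<pi>) g = g"
    and tp: "T_pol P r \<pi> V = T_opt P r V"
  shows "\<bar>g s0 - gain P r \<pi> s0\<bar> \<le> supnorm (\<lambda>s. T_opt P r V s - V s - g s)"
proof -
  define e where "e = (\<lambda>s. T_opt P r V s - V s - g s)"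
  define E where "E = supnorm e"
  define M where "M = supnorm V"
  define ex where "ex = (\<lambda>t. \<Sum>s\<in>UNIV. state_dist P \<pi> s0 t s * V s)"
  define ee where "ee = (\<lambda>t. \<Sum>s\<in>UNIV. state_dist P \<pi> s0 t s * e s)"
  have M0: "M \<ge> 0" unfolding M_def by (rule supnorm_nonneg)
  have rp: "r_pol r \<pi> s = V s + g s + e s - apply_P (P_pol P \<pi>) V s" for s
    using fun_cong[OF tp, of s] unfolding T_pol_def e_def by simp
  have er: "exp_reward P r \<pi> s0 t = ex t + g s0 + ee t - ex (Suc t)" for t
  proof -
    have "exp_reward P r \<pi> s0 t = (\<Sum>s\<in>UNIV. state_dist P \<pi> s0 t s * V s) + (\<Sum>s\<in>UNIV. state_dist P \<pi> s0 t s * g s)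
       + (\<Sum>s\<in>UNIV. state_dist P \<pi> s0 t s * e s) - (\<Sum>s\<in>UNIV. state_dist P \<pi> s0 t s * apply_P (P_pol P \<pi>) V s)"
      unfolding exp_reward_def rp by (simp add: algebra_simps sum.distrib sum_subtractf)
    then show ?thesis unfolding ex_def ee_def Ex_Suc Ex_inv[OF inv] .
  qed
  have sumT: "(\<Sum>t<T. exp_reward P r \<pi> s0 t) = ex 0 - ex T + real T * g s0 + (\<Sum>t<T. ee t)" for T
    by (induction T) (simp_all add: er algebra_simps)
  have exb: "\<bar>ex t\<bar> \<le> M" for t unfolding ex_def M_def by (rule Ex_bound[OF mdp pol])
  have eeb: "\<bar>ee t\<bar> \<le> E" for t unfolding ee_def E_def by (rule Ex_bound[OF mdp pol])
  define avg where "avg = (\<lambda>T::nat. (1 / real T) * (\<Sum>t<T. exp_reward P r \<pi> s0 t))"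
  have avgb: "\<bar>avg T - g s0\<bar> \<le> 2 * M / real T + E" if "T \<ge> 1" for T
  proof -
    have Tp: "real T > 0" using that by simp
    have "avg T - g s0 = (ex 0 - ex T) / real T + (\<Sum>t<T. ee t) / real T"
      proof -
        have "avg T = (ex 0 - ex T + real T * g s0 + (\<Sum>t<T. ee t)) / real T"
          unfolding avg_def sumT by simp
        also have "\<dots> = (ex 0 - ex T) / real T + (real T * g s0) / real T + (\<Sum>t<T. ee t) / real T"
          by (simp only: add_divide_distrib)
        finally have "avg T = (ex 0 - ex T) / real T + (real T * g s0) / real T + (\<Sum>t<T. ee t) / real T" .
        moreover have "(real T * g s0) / real T = g s0" using Tp by simp
        ultimately show ?thesis by linarith
      qed
    moreover have "\<bar>(ex 0 - ex T) / real T\<bar> \<le> 2 * M / real T"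
    proof -
      have "\<bar>ex 0 - ex T\<bar> \<le> 2 * M" using exb[of 0] exb[of T] by linarith
      then have "\<bar>ex 0 - ex T\<bar> / real T \<le> 2 * M / real T" using Tp by (intro divide_right_mono) auto
      then show ?thesis using Tp by (simp add: abs_divide)
    qed
    moreover have "\<bar>(\<Sum>t<T. ee t) / real T\<bar> \<le> E"
    proof -
      have "\<bar>\<Sum>t<T. ee t\<bar> \<le> (\<Sum>t<T. \<bar>ee t\<bar>)" by (rule sum_abs)
      also have "\<dots> \<le> (\<Sum>t<T. E)" by (rule sum_mono) (rule eeb)
      also have "\<dots> = real T * E" by simp
      finally have "\<bar>\<Sum>t<T. ee t\<bar> / real T \<le> real T * E / real T" using Tp by (intro divide_right_mono) auto
      then show ?thesis using Tp by (simp add: abs_divide)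
    qed
    ultimately show ?thesis by linarith
  qed
  have main: "\<bar>g s0 - gain P r \<pi> s0\<bar> \<le> E + \<epsilon>" if "\<epsilon> > 0" for \<epsilon>
  proof -
    obtain N :: nat where N: "2 * M / \<epsilon> < real N" using reals_Archimedean2 by blast
    have ev: "eventually (\<lambda>T. \<bar>avg T - g s0\<bar> \<le> E + \<epsilon>) sequentially"
    proof (rule eventually_sequentiallyI[of "N + 1"])
      fix T assume T: "N + 1 \<le> T"
      then have T1: "T \<ge> 1" by simp
      have "2 * M / \<epsilon> < real T" using N T by linarith
      then have "2 * M < \<epsilon> * real T" using that by (simp add: divide_less_eq mult.commute)
      then have "2 * M / real T \<le> \<epsilon>" using T1 by (simp add: divide_le_eq mult.commute)
      then show "\<bar>avg T - g s0\<bar> \<le> E + \<epsilon>" using avgb[OF T1] by linarith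
    qed
    have lo: "ereal (g s0 - (E + \<epsilon>)) \<le> liminf (\<lambda>T. ereal (avg T))"
      by (rule Liminf_bounded) (use ev in \<open>auto elim!: eventually_mono simp: abs_le_iff\<close>)
    have "liminf (\<lambda>T. ereal (avg T)) \<le> limsup (\<lambda>T. ereal (avg T))"
      by (rule Liminf_le_Limsup) simp
    also have "\<dots> \<le> ereal (g s0 + (E + \<epsilon>))"
      by (rule Limsup_bounded) (use ev in \<open>auto elim!: eventually_mono simp: abs_le_iff\<close>)
    finally have hi: "liminf (\<lambda>T. ereal (avg T)) \<le> ereal (g s0 + (E + \<epsilon>))" .
    have "gain P r \<pi> s0 = real_of_ereal (liminf (\<lambda>T. ereal (avg T)))"
      unfolding gain_def avg_def by simp
    then show ?thesis using ereal_bounds[OF lo hi] by (simp add: abs_le_iff)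
  qed
  have "\<bar>g s0 - gain P r \<pi> s0\<bar> \<le> E"
    by (rule field_le_epsilon) (use main in \<open>auto simp: add.commute\<close>)
  then show ?thesis unfolding E_def e_def .
qed



theorem corollary2:
  fixes P :: "'s::finite \<Rightarrow> 'a::finite \<Rightarrow> 's \<Rightarrow> real"
    and r :: "'s \<Rightarrow> 'a \<Rightarrow> real"
    and h :: "'s \<Rightarrow> real"
    and V :: "nat \<Rightarrow> 's \<Rightarrow> real"
    and \<pi>k :: "nat \<Rightarrow> 's \<Rightarrow> 'a \<Rightarrow> real"
  assumes mdp: "is_mdp P"
    and inv: "\<And>\<pi>. is_policy \<pi> \<Longrightarrow> apply_P (P_pol P \<pi>) (opt_gain P r) = opt_gain P r"
    and bell: "modified_bellman P r (opt_gain P r) h"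
    and V_rec: "\<And>k. k \<ge> 1 \<Longrightarrow>
        V k = (\<lambda>s. 2 / (real k + 2) * V 0 s + real k / (real k + 2) * T_opt P r (V (k - 1)) s)"
    and greedy_pol: "\<And>k. k \<ge> 1 \<Longrightarrow> is_policy (\<pi>k k)"
    and greedy: "\<And>k. k \<ge> 1 \<Longrightarrow> T_pol P r (\<pi>k k) (V k) = T_opt P r (V k)"
    and k: "k \<ge> 1"
  shows "supnorm (\<lambda>s. opt_gain P r s - gain P r (\<pi>k k) s)
           \<le> supnorm (\<lambda>s. T_opt P r (V k) s - V k s - opt_gain P r s)
       \<and> supnorm (\<lambda>s. T_opt P r (V k) s - V k s - opt_gain P r s)
           \<le> 8 / (real k + 1) * supnorm (\<lambda>s. V 0 s - h s)"
proof
  define g where "g = opt_gain P r"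
  have act: "(\<Sum>s'\<in>UNIV. P s a s' * g s') = g s" for s a
    unfolding g_def by (rule inv_action[OF inv])
  show "supnorm (\<lambda>s. opt_gain P r s - gain P r (\<pi>k k) s)
           \<le> supnorm (\<lambda>s. T_opt P r (V k) s - V k s - opt_gain P r s)"
  proof (rule supnorm_le)
    fix s show "\<bar>opt_gain P r s - gain P r (\<pi>k k) s\<bar> \<le> supnorm (\<lambda>s. T_opt P r (V k) s - V k s - opt_gain P r s)"
      by (rule gain_bound[OF mdp greedy_pol[OF k] inv[OF greedy_pol[OF k]] greedy[OF k]])
  qed
  define F where "F = (\<lambda>W s. T_opt P r W s - g s)"
  define W where "W = (\<lambda>j s. V j s - real j / 3 * g s)"
  have shift: "T_opt P r (W j) s = T_opt P r (V j) s - real j / 3 * g s" for j s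
  proof -
    have "W j = (\<lambda>s. V j s + (- (real j / 3)) * g s)" unfolding W_def by auto
    then show ?thesis using T_opt_shift[of P s g r "V j" "- (real j / 3)", OF act] by simp
  qed
  have ne: "\<bar>F u s - F v s\<bar> \<le> supnorm (\<lambda>s. u s - v s)" for u v s
    unfolding F_def using T_opt_nonexp[OF mdp, of r u s v] by simp
  have fp: "F h = h"
  proof
    fix s
    have "T_opt P r h s = h s + g s" using bell unfolding modified_bellman_def T_opt_def g_def by blast
    then show "F h s = h s" unfolding F_def by simp
  qed
  have rec: "W j = (\<lambda>s. 2 / (real j + 2) * W 0 s + real j / (real j + 2) * F (W (j - 1)) s)" if j: "j \<ge> 1" for j
  proof
    fix s
    have rj: "real (j - 1) = real j - 1" using j by simp
    have Fv: "F (W (j - 1)) s = T_opt P r (V (j - 1)) s - ((real j - 1) / 3 * g s + g s)"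
      unfolding F_def shift rj by simp
    have Vj: "V j s = 2 / (real j + 2) * V 0 s + real j / (real j + 2) * T_opt P r (V (j - 1)) s"
      using fun_cong[OF V_rec[OF j], of s] by simp
    have W0: "W 0 s = V 0 s" unfolding W_def by simp
    have c: "real j / (real j + 2) * ((real j - 1) / 3 * g s + g s) = real j / 3 * g s"
    proof -
      have "real j + 2 \<noteq> 0" by simp
      then show ?thesis by (simp add: field_simps)
    qed
    have "real j / (real j + 2) * F (W (j - 1)) s
        = real j / (real j + 2) * T_opt P r (V (j - 1)) s - real j / (real j + 2) * ((real j - 1) / 3 * g s + g s)"
      unfolding Fv by (rule right_diff_distrib)
    then have "real j / (real j + 2) * F (W (j - 1)) s = real j / (real j + 2) * T_opt P r (V (j - 1)) s - real j / 3 * g s"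
      unfolding c .
    moreover have "W j s = V j s - real j / 3 * g s" unfolding W_def by simp
    ultimately show "W j s = 2 / (real j + 2) * W 0 s + real j / (real j + 2) * F (W (j - 1)) s"
      unfolding W0 Vj by linarith
  qed
  have H: "supnorm (\<lambda>s. F (W k) s - W k s) \<le> 8 / (real k + 1) * supnorm (\<lambda>s. W 0 s - h s)"
    by (rule halpern[where F=F and x=W, OF ne fp rec k])
  have e1: "(\<lambda>s. F (W k) s - W k s) = (\<lambda>s. T_opt P r (V k) s - V k s - opt_gain P r s)"
    unfolding F_def shift unfolding W_def g_def by auto
  have e2: "(\<lambda>s. W 0 s - h s) = (\<lambda>s. V 0 s - h s)" unfolding W_def by simp
  show "supnorm (\<lambda>s. T_opt P r (V k) s - V k s - opt_gain P r s)
           \<le> 8 / (real k + 1) * supnorm (\<lambda>s. V 0 s - h s)"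
    using H unfolding e1 e2 .
qed

end
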